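(* Let $m$ be a prime and let $k<n$ be positive integers. Let $\mathcal{C}\subseteq\mathbb{F}_{q^m}^n$ be an $[n,k]$ linear code with systematic generator matrix $[I_k\,|\,A]$, $A\in\mathcal{M}_{k,n-k}(\mathbb{F}_{q^m})$, and let $\mathcal{S}$ be the set of entries of $A$. If some $\alpha\in\mathcal{S}$ satisfies $\alpha\notin\mathbb{F}_q$, then every $\mathbb{F}_q$-linear automorphism $\varphi$ of $\mathbb{F}_{q^m}$ that is linear on $\mathcal{C}$ is fully linear over $\mathbb{F}_{q^m}$.
   Context: $q$ is a prime power (the paper takes $q$ a power of $2$). $I_k$ is the $k\times k$ identity matrix. An $\mathbb{F}_q$-linear automorphism of $\mathbb{F}_{q^m}$ is a bijective $\mathbb{F}_q$-linear map $\varphi:\mathbb{F}_{q^m}\to\mathbb{F}_{q^m}$, applied componentwise to vectors, with $\varphi(\mathcal{V})=\{\varphi(\bm{v}):\bm{v}\in\mathcal{V}\}$. $\varphi$ is linear on an $\mathbb{F}_{q^m}$-linear code $\mathcal{C}$ if $\varphi(\mathcal{C})$ is an $\mathbb{F}_{q^m}$-linear subspace; $\varphi$ is fully linear over $\mathbb{F}_{q^m}$ if it is linear on every $\mathbb{F}_{q^m}$-linear code of every length. *)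

theory Defs
  imports Main "HOL-Computational_Algebra.Primes"
begin

text \<open>K is a subfield of the (finite) field 'a; it plays the role of F_q inside F_{q^m}.\<close>
definition is_subfield :: "'a::field set \<Rightarrow> bool" where
  "is_subfield K \<longleftrightarrow> 0 \<in> K \<and> 1 \<in> K \<and>
     (\<forall>x\<in>K. \<forall>y\<in>K. x + y \<in> K \<and> x * y \<in> K) \<and>
     (\<forall>x\<in>K. - x \<in> K) \<and> (\<forall>x\<in>K. x \<noteq> 0 \<longrightarrow> inverse x \<in> K)"

definition is_linear_code :: "nat \<Rightarrow> 'a::field list set \<Rightarrow> bool" where
  "is_linear_code n C \<longleftrightarrow> C \<subseteq> {v. length v = n} \<and> replicate n 0 \<in> C \<and>
     (\<forall>u\<in>C. \<forall>v\<in>C. map2 (+) u v \<in> C) \<and>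
     (\<forall>c. \<forall>v\<in>C. map ((*) c) v \<in> C)"

definition Fq_linear_aut :: "'a::field set \<Rightarrow> ('a \<Rightarrow> 'a) \<Rightarrow> bool" where
  "Fq_linear_aut K \<phi> \<longleftrightarrow> bij \<phi> \<and> (\<forall>x y. \<phi> (x + y) = \<phi> x + \<phi> y) \<and>
     (\<forall>c\<in>K. \<forall>x. \<phi> (c * x) = c * \<phi> x)"

definition code_image :: "('a \<Rightarrow> 'a) \<Rightarrow> 'a list set \<Rightarrow> 'a list set" where
  "code_image \<phi> C = map \<phi> ` C"

definition linear_on :: "('a::field \<Rightarrow> 'a) \<Rightarrow> nat \<Rightarrow> 'a list set \<Rightarrow> bool" where
  "linear_on \<phi> n C \<longleftrightarrow> is_linear_code n (code_image \<phi> C)"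

definition fully_linear :: "('a::field \<Rightarrow> 'a) \<Rightarrow> bool" where
  "fully_linear \<phi> \<longleftrightarrow> (\<forall>n C. is_linear_code n C \<longrightarrow> linear_on \<phi> n C)"

text \<open>Systematic generator matrix [I_k | A]; A is given by its entries A i j, i<k, j<n-k.\<close>
definition sys_gen_entry :: "nat \<Rightarrow> (nat \<Rightarrow> nat \<Rightarrow> 'a::field) \<Rightarrow> nat \<Rightarrow> nat \<Rightarrow> 'a" where
  "sys_gen_entry k A i j = (if j < k then (if i = j then 1 else 0) else A i (j - k))"

definition sys_code :: "nat \<Rightarrow> nat \<Rightarrow> (nat \<Rightarrow> nat \<Rightarrow> 'a::field) \<Rightarrow> 'a list set" where
  "sys_code n k A = {map (\<lambda>j. \<Sum>i<k. u i * sys_gen_entry k A i j) [0..<n] | u. True}"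

definition entry_set :: "nat \<Rightarrow> nat \<Rightarrow> (nat \<Rightarrow> nat \<Rightarrow> 'a) \<Rightarrow> 'a set" where
  "entry_set n k A = {A i j | i j. i < k \<and> j < n - k}"

end

theory Submission imports Defs begin
definition subsp :: "'a::field set \<Rightarrow> 'a set \<Rightarrow> bool" where
 "subsp L N \<longleftrightarrow> 0 \<in> N \<and> (\<forall>x\<in>N. \<forall>y\<in>N. x+y \<in> N) \<and> (\<forall>l\<in>L. \<forall>x\<in>N. l*x \<in> N)"

lemma subsp_grow:
  fixes L N M :: "'a::{field,finite} set"
  assumes L: "is_subfield L" and N: "subsp L N" and M: "subsp L M" and NM: "N \<subseteq> M"
   and cN: "card N = card L ^ s"
  shows "\<exists>t. card M = card L ^ t"
  using N NM cN
proof (induction "card M - card N" arbitrary: N s rule: less_induct)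
  case less
  show ?case
  proof (cases "N = M")
    case True then show ?thesis using less by auto
  next
    case False
    then obtain x where x: "x \<in> M" "x \<notin> N" using less by auto
    define N' where "N' = (\<lambda>(a,l). a + l*x) ` (N \<times> L)"
    have L0: "0 \<in> L" "1 \<in> L" and Lc: "\<forall>a\<in>L. \<forall>b\<in>L. a + b \<in> L \<and> a * b \<in> L"
      and Ln: "\<forall>a\<in>L. - a \<in> L" and Li: "\<forall>a\<in>L. a \<noteq> 0 \<longrightarrow> inverse a \<in> L"
      using L unfolding is_subfield_def by auto
    have inj: "inj_on (\<lambda>(a,l). a + l*x) (N \<times> L)"
    proof (rule inj_onI, clarsimp)
      fix a l b l'
      assume a: "a \<in> N" "l \<in> L" "b \<in> N" "l' \<in> L" and e: "a + l*x = b + l'*x"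
      show "a = b \<and> l = l'"
      proof (cases "l = l'")
        case True then show ?thesis using e by simp
      next
        case False
        have "(l - l') * x = b - a" using e by (simp add: algebra_simps)
        hence "x = inverse (l - l') * (b + (-1) * a)" using False by (simp add: field_simps)
        moreover have "- l' \<in> L" using Ln a by auto
        hence "l + - l' \<in> L" using Lc a by blast
        hence "l - l' \<in> L" by simp
        hence "inverse (l - l') \<in> L" using Li False by simp
        moreover have "(-1) \<in> L" using Ln L0 by auto
        hence "(-1)*a \<in> N" using less.prems(1) a unfolding subsp_def by auto
        hence "b + (-1)*a \<in> N" using less.prems(1) a unfolding subsp_def by auto
        ultimately show ?thesis using less.prems(1) x unfolding subsp_def by auto
      qed
    qed
    have cN': "card N' = card N * card L" unfolding N'_def
      using card_image[OF inj] by (simp add: card_cartesian_product)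
    have NN': "N \<subseteq> N'" unfolding N'_def using L0 by force
    have xN': "x \<in> N'" unfolding N'_def using less.prems(1) L0 unfolding subsp_def by force
    have sub': "subsp L N'"
      unfolding subsp_def
    proof (intro conjI ballI)
      show "0 \<in> N'" using NN' less.prems(1) unfolding subsp_def by auto
    next
      fix y z assume "y \<in> N'" "z \<in> N'"
      then obtain a l b l' where "a \<in> N" "l \<in> L" "b \<in> N" "l' \<in> L" "y = a + l*x" "z = b + l'*x"
        unfolding N'_def by auto
      moreover have "y + z = (a + b) + (l + l')*x" using calculation by (simp add: algebra_simps)
      moreover have "a + b \<in> N" "l + l' \<in> L" using calculation less.prems(1) Lc unfolding subsp_def by auto
      ultimately show "y + z \<in> N'" unfolding N'_def by (intro image_eqI[where x="(a+b, l+l')"]) auto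
    next
      fix c y assume "c \<in> L" "y \<in> N'"
      then obtain a l where "a \<in> N" "l \<in> L" "y = a + l*x"
        unfolding N'_def by auto
      moreover have "c * y = (c * a) + (c * l)*x" using calculation by (simp add: algebra_simps)
      moreover have "c * a \<in> N" "c * l \<in> L" using calculation less.prems(1) Lc \<open>c \<in> L\<close> unfolding subsp_def by auto
      ultimately show "c * y \<in> N'" unfolding N'_def by (intro image_eqI[where x="(c*a, c*l)"]) auto
    qed
    have N'M: "N' \<subseteq> M"
    proof
      fix y assume "y \<in> N'"
      then obtain a l where "a \<in> N" "l \<in> L" "y = a + l*x" unfolding N'_def by auto
      moreover have "a \<in> M" using calculation less.prems(2) by auto
      moreover have "l * x \<in> M" using calculation M x unfolding subsp_def by auto
      ultimately show "y \<in> M" using M unfolding subsp_def by auto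
    qed
    have "card N < card N'" using NN' xN' x
      by (intro psubset_card_mono) auto
    moreover have "card N' \<le> card M" using N'M by (simp add: card_mono)
    ultimately have "card M - card N' < card M - card N" by simp
    moreover have "card N' = card L ^ Suc s" using cN' less.prems(3) by simp
    ultimately show ?thesis using less.hyps sub' N'M by blast
  qed
qed

lemma subsp_card:
  fixes L M :: "'a::{field,finite} set"
  assumes L: "is_subfield L" and M: "subsp L M"
  shows "\<exists>t. card M = card L ^ t"
proof -
  have "subsp L {0}" unfolding subsp_def by simp
  moreover have "{0} \<subseteq> M" using M unfolding subsp_def by simp
  moreover have "card {0::'a} = card L ^ 0" by simp
  ultimately show ?thesis using subsp_grow[OF L _ M] by blast
qed


lemma comm_all:
  fixes K :: "'a::{field,finite} set" and \<psi> :: "'a \<Rightarrow> 'a"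
  assumes K: "is_subfield K" and cK: "card K = q" and cU: "card (UNIV :: 'a set) = q ^ m"
    and pm: "prime m" and aK: "\<alpha> \<notin> K"
    and add: "\<And>x y. \<psi> (x + y) = \<psi> x + \<psi> y"
    and sc: "\<And>a x. a \<in> K \<Longrightarrow> \<psi> (a * x) = a * \<psi> x"
    and al: "\<And>x. \<psi> (\<alpha> * x) = \<alpha> * \<psi> x"
  shows "\<psi> x = x * \<psi> 1"
proof -
  define L where "L = {b. \<forall>x. \<psi> (b * x) = b * \<psi> x}"
  have KL: "K \<subseteq> L" unfolding L_def using sc by auto
  have aL: "\<alpha> \<in> L" unfolding L_def using al by auto
  have Lsf: "is_subfield L" unfolding is_subfield_def
  proof (intro conjI ballI impI)
    show "0 \<in> L" "1 \<in> L" unfolding L_def using add by (auto, metis add_cancel_right_right)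
  next
    fix a b assume "a \<in> L" "b \<in> L"
    then show "a + b \<in> L" "a * b \<in> L" unfolding L_def by (auto simp: distrib_right add mult.assoc)
  next
    fix a assume "a \<in> L"
    have m1: "-1 \<in> K" using K unfolding is_subfield_def by auto
    have "\<psi> (- a * x) = - a * \<psi> x" for x
    proof -
      have "\<psi> (- a * x) = \<psi> (-1 * (a * x))" by simp
      also have "\<dots> = -1 * \<psi> (a * x)" using sc[OF m1] .
      also have "\<dots> = - a * \<psi> x" using \<open>a \<in> L\<close> unfolding L_def by simp
      finally show ?thesis .
    qed
    then show "- a \<in> L" unfolding L_def by simp
  next
    fix a assume a: "a \<in> L" "a \<noteq> 0"
    show "inverse a \<in> L" unfolding L_def
    proof (rule CollectI, rule allI)
      fix x
      have "a * \<psi> (inverse a * x) = \<psi> (a * (inverse a * x))" using a unfolding L_def by auto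
      also have "\<dots> = \<psi> x" using a by (simp add: mult.assoc[symmetric])
      finally show "\<psi> (inverse a * x) = inverse a * \<psi> x" using a by (simp add: field_simps)
    qed
  qed
  have "subsp K L" unfolding subsp_def using Lsf KL unfolding is_subfield_def by blast
  then obtain s where s: "card L = q ^ s" using subsp_card[OF K] cK by blast
  have "subsp L (UNIV::'a set)" unfolding subsp_def by simp
  then obtain t where t: "card (UNIV::'a set) = card L ^ t" using subsp_card[OF Lsf] by blast
  have "0 \<in> K" "1 \<in> K" using K unfolding is_subfield_def by auto
  hence "card {0::'a, 1} \<le> card K" by (intro card_mono) auto
  hence q2: "2 \<le> q" using cK by simp
  have "q ^ m = q ^ (s * t)" using cU t s by (simp add: power_mult)
  hence mst: "m = s * t" using q2 by (simp add: power_inject_exp)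
  hence "s = 1 \<or> t = 1" using pm using prime_product by blast
  moreover have "s \<noteq> 1"
  proof
    assume "s = 1"
    hence "card L = card K" using s cK by simp
    hence "K = L" using KL by (intro card_subset_eq) auto
    thus False using aL aK by simp
  qed
  ultimately have "t = 1" by simp
  hence "card L = card (UNIV :: 'a set)" using t by simp
  hence "L = UNIV" by (intro card_subset_eq) auto
  hence "x \<in> L" by simp
  hence "\<psi> (x * 1) = x * \<psi> 1" unfolding L_def by blast
  thus ?thesis by simp
qed

lemma sum_single:
  fixes f :: "nat \<Rightarrow> 'a::field"
  assumes "i < k" and "\<And>l. l < k \<Longrightarrow> l \<noteq> i \<Longrightarrow> f l = 0"
  shows "(\<Sum>l<k. f l) = f i"
proof -
  have "(\<Sum>l<k. f l) = (\<Sum>l<k. if l = i then f i else 0)" by (rule sum.cong) (use assms in auto)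
  also have "\<dots> = f i" using assms(1) by simp
  finally show ?thesis .
qed

theorem mainTheorem6:
  fixes K :: "'a::{field,finite} set"
    and q m n k :: nat
    and A :: "nat \<Rightarrow> nat \<Rightarrow> 'a"
    and \<phi> :: "'a \<Rightarrow> 'a"
  assumes "is_subfield K" and "card K = q" and "card (UNIV :: 'a set) = q ^ m"
    and "prime m"
    and "0 < k" and "k < n"
    and "\<exists>\<alpha>\<in>entry_set n k A. \<alpha> \<notin> K"
    and "Fq_linear_aut K \<phi>"
    and "linear_on \<phi> n (sys_code n k A)"
  shows "fully_linear \<phi>"
proof -
  obtain i j where ij: "i < k" "j < n - k" "A i j \<notin> K"
    using assms(7) unfolding entry_set_def by auto
  define \<alpha> where "\<alpha> = A i j"
  have bij: "bij \<phi>" and padd: "\<And>x y. \<phi> (x + y) = \<phi> x + \<phi> y"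
    and psc: "\<And>c x. c \<in> K \<Longrightarrow> \<phi> (c * x) = c * \<phi> x"
    using assms(8) unfolding Fq_linear_aut_def by auto
  have inj: "inj \<phi>" using bij bij_is_inj by auto
  have surj: "surj \<phi>" using bij bij_is_surj by auto
  have "\<phi> 0 + \<phi> 0 = \<phi> 0 + 0" using padd[of 0 0] by simp
  hence p0: "\<phi> 0 = 0" by (simp only: add_left_cancel)
  define g where "g = sys_gen_entry k A"
  define cw where "cw u = map (\<lambda>p. \<Sum>l<k. u l * g l p) [0..<n]" for u :: "nat \<Rightarrow> 'a"
  have cwC: "cw u \<in> sys_code n k A" for u unfolding cw_def sys_code_def g_def by auto
  have Cform: "v \<in> sys_code n k A \<Longrightarrow> \<exists>u. v = cw u" for v
    unfolding cw_def sys_code_def g_def by auto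
  have lin: "is_linear_code n (map \<phi> ` sys_code n k A)"
    using assms(9) unfolding linear_on_def code_image_def .
  have key: "\<exists>d. \<forall>x. \<phi> (d * x) = c * \<phi> x" for c
  proof -
    define \<psi> where "\<psi> x = inv \<phi> (c * \<phi> x)" for x
    have pp: "\<phi> (\<psi> x) = c * \<phi> x" for x unfolding \<psi>_def using surj surj_f_inv_f by metis
    have uniq: "\<phi> y = c * \<phi> x \<Longrightarrow> \<psi> x = y" for x y using pp inj unfolding inj_def by metis
    have add: "\<psi> (x + y) = \<psi> x + \<psi> y" for x y
      by (rule uniq) (simp add: padd pp distrib_left)
    have sc: "a \<in> K \<Longrightarrow> \<psi> (a * x) = a * \<psi> x" for a x
      by (rule uniq) (simp add: psc pp)
    have al: "\<psi> (\<alpha> * x) = \<alpha> * \<psi> x" for x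
    proof -
      define w where "w = cw (\<lambda>l. if l = i then x else 0)"
      have "map \<phi> w \<in> map \<phi> ` sys_code n k A" using cwC unfolding w_def by auto
      hence "map ((*) c) (map \<phi> w) \<in> map \<phi> ` sys_code n k A" using lin unfolding is_linear_code_def by blast
      then obtain u where u: "map ((*) c) (map \<phi> w) = map \<phi> (cw u)" using Cform by blast
      have nth: "c * \<phi> (\<Sum>l<k. (if l = i then x else 0) * g l p) = \<phi> (\<Sum>l<k. u l * g l p)" if "p < n" for p
      proof -
        have "map ((*) c) (map \<phi> w) ! p = map \<phi> (cw u) ! p" using u by simp
        thus ?thesis using that unfolding w_def cw_def by simp
      qed
      have wsum: "(\<Sum>l<k. (if l = i then x else 0) * g l p) = x * g i p" for p
        using sum_single[OF ij(1), of "\<lambda>l. (if l = i then x else 0) * g l p"] by simp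
      have gl: "p < k \<Longrightarrow> g l p = (if l = p then 1 else 0)" for l p unfolding g_def sys_gen_entry_def by simp
      have gA: "g l (k + j) = A l j" for l unfolding g_def sys_gen_entry_def by simp
      have usum: "p < k \<Longrightarrow> (\<Sum>l<k. u l * g l p) = u p" for p
        using sum_single[of p k "\<lambda>l. u l * g l p"] gl by simp
      have u0: "u l = 0" if "l < k" "l \<noteq> i" for l
      proof -
        have "c * \<phi> (x * g i l) = \<phi> (u l)" using nth[of l] wsum usum that assms(6) by simp
        moreover have "g i l = 0" using gl that by simp
        ultimately have "\<phi> (u l) = \<phi> 0" using p0 by simp
        thus ?thesis using inj unfolding inj_def by blast
      qed
      have ui: "\<psi> x = u i"
      proof (rule uniq)
        have "c * \<phi> (x * g i i) = \<phi> (u i)" using nth[of i] wsum usum ij assms(6) by simp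
        thus "\<phi> (u i) = c * \<phi> x" using gl ij by simp
      qed
      have "k + j < n" using ij by simp
      have "c * \<phi> (x * A i j) = \<phi> (\<Sum>l<k. u l * A l j)" using nth[OF \<open>k + j < n\<close>] wsum[of "k + j"] gA by (simp only:)
      also have "(\<Sum>l<k. u l * A l j) = u i * A i j" using sum_single[OF ij(1), of "\<lambda>l. u l * A l j"] u0 by simp
      finally have "\<psi> (x * \<alpha>) = u i * \<alpha>" unfolding \<alpha>_def by (intro uniq) simp
      thus ?thesis using ui by (simp add: mult.commute)
    qed
    have "\<psi> x = x * \<psi> 1" for x
      by (rule comm_all[OF assms(1,2,3,4) _ add sc al]) (use ij \<alpha>_def in auto)
    hence "\<phi> (\<psi> 1 * x) = c * \<phi> x" for x using pp by (metis mult.commute)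
    thus ?thesis by blast
  qed
  show ?thesis unfolding fully_linear_def linear_on_def code_image_def
  proof (intro allI impI)
    fix n' and C :: "'a list set"
    assume C: "is_linear_code n' C"
    show "is_linear_code n' (map \<phi> ` C)"
      unfolding is_linear_code_def
    proof (intro conjI ballI allI)
      show "map \<phi> ` C \<subseteq> {v. length v = n'}" using C unfolding is_linear_code_def by auto
      have "map \<phi> (replicate n' 0) = replicate n' 0" using p0 by simp
      thus "replicate n' 0 \<in> map \<phi> ` C" using C unfolding is_linear_code_def by force
    next
      fix a b assume "a \<in> map \<phi> ` C" "b \<in> map \<phi> ` C"
      then obtain u v where uv: "u \<in> C" "v \<in> C" "a = map \<phi> u" "b = map \<phi> v" by auto
      have "map2 (+) a b = map \<phi> (map2 (+) u v)" unfolding uv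
        by (simp add: zip_map1 zip_map2 padd split_def)
      moreover have "map2 (+) u v \<in> C" using C uv unfolding is_linear_code_def by blast
      ultimately show "map2 (+) a b \<in> map \<phi> ` C" by blast
    next
      fix c a assume "a \<in> map \<phi> ` C"
      then obtain v where v: "v \<in> C" "a = map \<phi> v" by auto
      obtain d where d: "\<And>x. \<phi> (d * x) = c * \<phi> x" using key by blast
      have "map ((*) c) a = map \<phi> (map ((*) d) v)" unfolding v by (simp add: d)
      moreover have "map ((*) d) v \<in> C" using C v unfolding is_linear_code_def by blast
      ultimately show "map ((*) c) a \<in> map \<phi> ` C" by blast
    qed
  qed
qed

end
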